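(* For $n\ge1$ let $A_n$ be the set of $n\times 2$ arrays $(m_{i,j})$ with entries in $\{0,1,2\}$ such that: (i) every entry $1$ has a $0$ immediately to its left or immediately above it; (ii) no entry $0$ has a $0$ immediately to its left or immediately above it; (iii) every entry $2$ has, in the same column, a $1$ immediately above it and a $0$ immediately above that $1$ (i.e. $m_{i,j}=2$ implies $i\ge 2$, $m_{i-1,j}=1$ and $m_{i-2,j}=0$, with rows indexed from the top). Let $d_n=|A_n|$. Then $d_n=d_{n-1}+2d_{n-3}$ for $n\ge4$, with $d_1=1$, $d_2=1$, $d_3=2$.
   Context: For example $A_1=\{(0\ 1)\}$ and $A_2=\left\{\begin{pmatrix}0&1\\1&0\end{pmatrix}\right\}$. *)

theory Defs
  imports Main
begin

text \<open>An n x 2 array is modelled as a function m :: nat => nat => nat, where m i j is the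
entry in row i (0-indexed, from the top) and column j (0-indexed, from the left), for i < n, j < 2.
To make the representation canonical, m is required to be 0 outside the array.\<close>

definition valid_array :: "nat \<Rightarrow> (nat \<Rightarrow> nat \<Rightarrow> nat) \<Rightarrow> bool" where
  "valid_array n m \<longleftrightarrow>
     (\<forall>i j. (n \<le> i \<or> 2 \<le> j) \<longrightarrow> m i j = 0) \<and>
     (\<forall>i<n. \<forall>j<2. m i j \<in> {0, 1, 2}) \<and>
     \<comment> \<open>(i) every 1 has a 0 immediately to its left or immediately above it\<close>
     (\<forall>i<n. \<forall>j<2. m i j = 1 \<longrightarrow>
        ((0 < j \<and> m i (j - 1) = 0) \<or> (0 < i \<and> m (i - 1) j = 0))) \<and>
     \<comment> \<open>(ii) no 0 has a 0 immediately to its left or immediately above it\<close>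
     (\<forall>i<n. \<forall>j<2. m i j = 0 \<longrightarrow>
        \<not> (0 < j \<and> m i (j - 1) = 0) \<and> \<not> (0 < i \<and> m (i - 1) j = 0)) \<and>
     \<comment> \<open>(iii) every 2 has a 1 directly above it and a 0 directly above that 1\<close>
     (\<forall>i<n. \<forall>j<2. m i j = 2 \<longrightarrow>
        (2 \<le> i \<and> m (i - 1) j = 1 \<and> m (i - 2) j = 0))"

definition A :: "nat \<Rightarrow> (nat \<Rightarrow> nat \<Rightarrow> nat) set" where
  "A n = {m. valid_array n m}"

definition d :: "nat \<Rightarrow> nat" where
  "d n = card (A n)"

end

theory Submission
  imports Defs
begin

definition cond :: "(nat \<Rightarrow> nat \<Rightarrow> nat) \<Rightarrow> nat \<Rightarrow> bool" where
  "cond m i \<longleftrightarrow>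
     (\<forall>j<2. m i j \<in> {0, 1, 2}) \<and>
     (\<forall>j<2. m i j = 1 \<longrightarrow>
        ((0 < j \<and> m i (j - 1) = 0) \<or> (0 < i \<and> m (i - 1) j = 0))) \<and>
     (\<forall>j<2. m i j = 0 \<longrightarrow>
        \<not> (0 < j \<and> m i (j - 1) = 0) \<and> \<not> (0 < i \<and> m (i - 1) j = 0)) \<and>
     (\<forall>j<2. m i j = 2 \<longrightarrow>
        (2 \<le> i \<and> m (i - 1) j = 1 \<and> m (i - 2) j = 0))"
lemma valid_alt: "valid_array n m \<longleftrightarrow>
   (\<forall>i j. (n \<le> i \<or> 2 \<le> j) \<longrightarrow> m i j = 0) \<and> (\<forall>i<n. cond m i)"
  unfolding valid_array_def cond_def by blast
lemma cond_trunc: "i < n \<Longrightarrow> cond (m(n := f)) i = cond m i"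
  proof -
  assume "i < n"
  then have "i \<noteq> n" "i - 1 \<noteq> n" "i - 2 \<noteq> n" by auto
  then show ?thesis unfolding cond_def by simp
qed
lemma ext_valid: "valid_array (Suc n) m \<longleftrightarrow>
   valid_array n (m(n := (\<lambda>_. 0))) \<and> (\<forall>j. 2 \<le> j \<longrightarrow> m n j = 0) \<and> cond m n"
proof
  assume h: "valid_array (Suc n) m"
  have z: "\<forall>i j. (n \<le> i \<or> 2 \<le> j) \<longrightarrow> (m(n := (\<lambda>_. 0))) i j = 0"
  proof (intro allI impI)
    fix i j :: nat assume a: "n \<le> i \<or> 2 \<le> j"
    show "(m(n := (\<lambda>_. 0))) i j = 0"
    proof (cases "i = n")
      case False
      then have "Suc n \<le> i \<or> 2 \<le> j" using a by auto
      then show ?thesis using h False unfolding valid_alt by auto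
    qed simp
  qed
  have c: "\<forall>i<n. cond (m(n := (\<lambda>_. 0))) i" using h unfolding valid_alt by (simp add: cond_trunc)
  show "valid_array n (m(n := (\<lambda>_. 0))) \<and> (\<forall>j. 2 \<le> j \<longrightarrow> m n j = 0) \<and> cond m n"
    using z c h unfolding valid_alt by simp
next
  assume h: "valid_array n (m(n := (\<lambda>_. 0))) \<and> (\<forall>j. 2 \<le> j \<longrightarrow> m n j = 0) \<and> cond m n"
  have z: "\<forall>i j. (Suc n \<le> i \<or> 2 \<le> j) \<longrightarrow> m i j = 0"
  proof (intro allI impI)
    fix i j :: nat assume a: "Suc n \<le> i \<or> 2 \<le> j"
    show "m i j = 0"
    proof (cases "i = n")
      case True then show ?thesis using a h by simp
    next
      case False
      then have "m i j = (m(n := (\<lambda>_. 0))) i j" by simp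
      also have "\<dots> = 0"
      proof -
        have "n \<le> i \<or> 2 \<le> j" using a by auto
        moreover have "valid_array n (m(n := (\<lambda>_. 0)))" using h by blast
        ultimately show ?thesis unfolding valid_alt by blast
      qed
      finally show ?thesis .
    qed
  qed
  have c: "\<forall>i<Suc n. cond m i"
  proof (intro allI impI)
    fix i assume "i < Suc n"
    then consider "i < n" | "i = n" by linarith
    then show "cond m i"
    proof cases
      case 1 then show ?thesis using h unfolding valid_alt by (metis cond_trunc)
    qed (use h in simp)
  qed
  show "valid_array (Suc n) m" using z c unfolding valid_alt by blast
qed

definition row :: "(nat \<Rightarrow> nat \<Rightarrow> nat) \<Rightarrow> nat \<Rightarrow> nat \<times> nat" where
  "row m i = (m i 0, m i 1)"

definition mk :: "nat \<times> nat \<Rightarrow> nat \<Rightarrow> nat" where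
  "mk z = (\<lambda>j. if j = 0 then fst z else if j = 1 then snd z else 0)"

definition tr :: "nat \<times> nat \<Rightarrow> nat \<times> nat \<Rightarrow> nat \<times> nat \<Rightarrow> bool" where
  "tr x y z \<longleftrightarrow> fst z \<le> 2 \<and> snd z \<le> 2 \<and>
     (fst z = 1 \<longrightarrow> fst y = 0) \<and> (fst z = 0 \<longrightarrow> fst y \<noteq> 0) \<and>
     (fst z = 2 \<longrightarrow> fst y = 1 \<and> fst x = 0) \<and>
     (snd z = 1 \<longrightarrow> fst z = 0 \<or> snd y = 0) \<and>
     (snd z = 0 \<longrightarrow> fst z \<noteq> 0 \<and> snd y \<noteq> 0) \<and>
     (snd z = 2 \<longrightarrow> snd y = 1 \<and> snd x = 0)"

lemma all_less_two: "(\<forall>j<(2::nat). P j) \<longleftrightarrow> P 0 \<and> P 1"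
  by (auto simp: less_2_cases_iff)

lemma cond_tr: "2 \<le> n \<Longrightarrow> cond m n \<longleftrightarrow> tr (row m (n-2)) (row m (n-1)) (row m n)"
  proof -
  assume n: "2 \<le> n"
  define a where "a = m n 0"
  define b where "b = m n 1"
  define p where "p = m (n-1) 0"
  define q where "q = m (n-1) 1"
  define r where "r = m (n-2) 0"
  define s where "s = m (n-2) 1"
  have "cond m n \<longleftrightarrow> (a \<in> {0,1,2} \<and> b \<in> {0,1,2} \<and> (a = 1 \<longrightarrow> p = 0) \<and> (b = 1 \<longrightarrow> a = 0 \<or> q = 0)
     \<and> (a = 0 \<longrightarrow> p \<noteq> 0) \<and> (b = 0 \<longrightarrow> a \<noteq> 0 \<and> q \<noteq> 0) \<and> (a = 2 \<longrightarrow> p = 1 \<and> r = 0) \<and> (b = 2 \<longrightarrow> q = 1 \<and> s = 0))"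
    unfolding cond_def all_less_two a_def b_def p_def q_def r_def s_def using n by auto
  also have "\<dots> \<longleftrightarrow> tr (r,s) (p,q) (a,b)"
    unfolding tr_def by auto
  finally show ?thesis unfolding row_def a_def b_def p_def q_def r_def s_def .
qed


definition RS :: "(nat \<times> nat) set" where "RS = {0,1,2} \<times> {0,1,2}"

lemma row_RS: "cond m i \<Longrightarrow> row m i \<in> RS"
  unfolding cond_def all_less_two row_def RS_def by auto

lemma mk_row: "(\<forall>j. 2 \<le> j \<longrightarrow> m n j = 0) \<Longrightarrow> mk (row m n) = m n"
proof
  fix j assume h: "\<forall>j. 2 \<le> j \<longrightarrow> m n j = 0"
  show "mk (row m n) j = m n j"
  proof (cases "j = 0 \<or> j = 1")
    case True then show ?thesis unfolding mk_def row_def by auto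
  next
    case False then show ?thesis using h unfolding mk_def row_def by auto
  qed
qed

lemma mk_RS: "z \<in> RS \<Longrightarrow> \<forall>j. 2 \<le> j \<longrightarrow> mk z j = 0"
  unfolding mk_def by auto

lemma row_mk: "row (m(n := mk z)) n = z"
  unfolding row_def mk_def by simp

lemma row_upd: "i \<noteq> n \<Longrightarrow> row (m(n := f)) i = row m i"
  unfolding row_def by simp

lemma A_zero_row: "m \<in> A n \<Longrightarrow> m n = (\<lambda>_. 0)"
  unfolding A_def valid_alt by auto

lemma A_Suc_sub: "A (Suc n) \<subseteq> (\<lambda>(m, z). m(n := mk z)) ` (A n \<times> RS)"
proof
  fix m' assume "m' \<in> A (Suc n)"
  then have h: "valid_array n (m'(n := (\<lambda>_. 0)))" "\<forall>j. 2 \<le> j \<longrightarrow> m' n j = 0" "cond m' n"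
    unfolding A_def ext_valid by auto
  have 1: "(\<lambda>(m, z). m(n := mk z)) (m'(n := (\<lambda>_. 0)), row m' n) = m'"
    using mk_row[of m' n, OF h(2)] by simp
  have 2: "(m'(n := (\<lambda>_. 0)), row m' n) \<in> A n \<times> RS" using h row_RS unfolding A_def by auto
  show "m' \<in> (\<lambda>(m, z). m(n := mk z)) ` (A n \<times> RS)" 
    by (rule image_eqI[where x="(m'(n := (\<lambda>_. 0)), row m' n)"]) (fact 1[symmetric], fact 2)
qed

lemma A_0: "A 0 = {\<lambda>_ _. 0}"
  unfolding A_def valid_alt by auto

lemma finite_RS: "finite RS" unfolding RS_def by simp

lemma finite_A: "finite (A n)"
proof (induction n)
  case 0 then show ?case by (simp add: A_0)
next
  case (Suc n)
  then show ?case using A_Suc_sub finite_RS by (meson finite_SigmaI finite_imageI finite_subset)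
qed

definition S :: "nat \<Rightarrow> nat \<times> nat \<Rightarrow> nat \<times> nat \<Rightarrow> (nat \<Rightarrow> nat \<Rightarrow> nat) set" where
  "S n x y = {m \<in> A n. row m (n-2) = x \<and> row m (n-1) = y}"

lemma le2: "(a::nat) \<le> 2 \<Longrightarrow> a \<in> {0,1,2}" by auto

lemma S_step:
  assumes n: "2 \<le> n"
  shows "S (Suc n) y z = (\<lambda>m. m(n := mk z)) ` (\<Union>x\<in>{x\<in>RS. tr x y z}. S n x y)"
proof
  show "S (Suc n) y z \<subseteq> (\<lambda>m. m(n := mk z)) ` (\<Union>x\<in>{x\<in>RS. tr x y z}. S n x y)"
  proof
    fix m' assume m': "m' \<in> S (Suc n) y z"
    then have h: "valid_array n (m'(n := (\<lambda>_. 0)))" "\<forall>j. 2 \<le> j \<longrightarrow> m' n j = 0" "cond m' n"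
      and r: "row m' (n - 1) = y" "row m' n = z"
      unfolding S_def A_def ext_valid by simp_all
    define m where "m = m'(n := (\<lambda>_. 0))"
    have mz: "mk z = m' n" using mk_row[of m' n, OF h(2)] r(2) by simp
    have e: "m' = m(n := mk z)" unfolding m_def mz by simp
    have n1: "n - 1 \<noteq> n" "n - 2 \<noteq> n" using n by auto
    have t: "tr (row m' (n-2)) y z" using cond_tr[OF n] h(3) r by simp
    have "n - 2 < n" using n by simp
    then have "cond m (n-2)" using h(1) unfolding m_def valid_alt by blast
    then have x: "row m (n-2) \<in> RS" by (rule row_RS)
    have "m \<in> S n (row m (n-2)) y" using h(1) r n1 unfolding S_def A_def m_def by (simp add: row_upd)
    moreover have "row m (n-2) = row m' (n-2)" unfolding m_def using n1 by (simp add: row_upd)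
    ultimately have "m \<in> (\<Union>x\<in>{x\<in>RS. tr x y z}. S n x y)"
      using x t by (intro UN_I[of "row m' (n-2)"]) auto
    then show "m' \<in> (\<lambda>m. m(n := mk z)) ` (\<Union>x\<in>{x\<in>RS. tr x y z}. S n x y)"
      unfolding e by (rule imageI)
  qed
next
  show "(\<lambda>m. m(n := mk z)) ` (\<Union>x\<in>{x\<in>RS. tr x y z}. S n x y) \<subseteq> S (Suc n) y z"
  proof
    fix m' assume "m' \<in> (\<lambda>m. m(n := mk z)) ` (\<Union>x\<in>{x\<in>RS. tr x y z}. S n x y)"
    then obtain m where m1: "m \<in> (\<Union>x\<in>{x\<in>RS. tr x y z}. S n x y)" and e: "m' = m(n := mk z)"
      by (rule imageE) simp
    from m1 obtain x where x0: "x \<in> {x\<in>RS. tr x y z}" and m: "m \<in> S n x y" by (rule UN_E)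
    from x0 have x: "x \<in> RS" "tr x y z" by simp_all
    have mA: "m \<in> A n" and r: "row m (n-2) = x" "row m (n-1) = y" using m unfolding S_def by auto
    have n1: "n - 1 \<noteq> n" "n - 2 \<noteq> n" using n by auto
    have "fst z \<le> 2" "snd z \<le> 2" using x(2) unfolding tr_def by simp_all
    then have zRS: "z \<in> RS" unfolding RS_def mem_Times_iff using le2 by blast
    have t1: "m'(n := (\<lambda>_. 0)) = m" unfolding e using fun_upd_idem[of m n, OF A_zero_row[OF mA]] by simp
    have t2: "\<forall>j. 2 \<le> j \<longrightarrow> m' n j = 0" using mk_RS[OF zRS] e by simp
    have rr: "row m' (n-2) = x" "row m' (n-1) = y" "row m' n = z"
      using r n1 e by (simp_all add: row_upd row_mk)
    have t3: "cond m' n" using cond_tr[OF n] rr x(2) by simp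
    have "valid_array (Suc n) m'" unfolding ext_valid using t1 t2 t3 mA unfolding A_def by simp
    then show "m' \<in> S (Suc n) y z" unfolding S_def A_def using rr by simp
  qed
qed


definition cnt :: "nat \<Rightarrow> nat \<times> nat \<Rightarrow> nat \<times> nat \<Rightarrow> nat" where
  "cnt n x y = card (S n x y)"

lemma finite_S: "finite (S n x y)"
  unfolding S_def using finite_A by simp

lemma cnt_step:
  assumes n: "2 \<le> n"
  shows "cnt (Suc n) y z = (\<Sum>x\<in>RS. if tr x y z then cnt n x y else 0)"
proof -
  let ?U = "\<Union>x\<in>{x\<in>RS. tr x y z}. S n x y"
  have inj: "inj_on (\<lambda>m. m(n := mk z)) ?U"
  proof (rule inj_onI)
    fix m1 m2 assume m1: "m1 \<in> ?U" and m2: "m2 \<in> ?U" and e: "m1(n := mk z) = m2(n := mk z)"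
    have a1: "m1 \<in> A n" using m1 unfolding S_def by auto
    have a2: "m2 \<in> A n" using m2 unfolding S_def by auto
    have "m1 = (m1(n := mk z))(n := (\<lambda>_. 0))" using fun_upd_idem[of m1 n, OF A_zero_row[OF a1]] by simp
    also have "\<dots> = (m2(n := mk z))(n := (\<lambda>_. 0))" using e by simp
    also have "\<dots> = m2" using fun_upd_idem[of m2 n, OF A_zero_row[OF a2]] by simp
    finally show "m1 = m2" .
  qed
  have fin: "finite {x\<in>RS. tr x y z}" using finite_RS by simp
  have disj: "\<forall>x1\<in>{x\<in>RS. tr x y z}. \<forall>x2\<in>{x\<in>RS. tr x y z}. x1 \<noteq> x2 \<longrightarrow> S n x1 y \<inter> S n x2 y = {}"
    unfolding S_def by auto
  have "cnt (Suc n) y z = card ?U"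
    unfolding cnt_def S_step[OF n] by (rule card_image[OF inj])
  also have "\<dots> = (\<Sum>x\<in>{x\<in>RS. tr x y z}. cnt n x y)"
    unfolding cnt_def by (rule card_UN_disjoint[OF fin _ disj]) (simp add: finite_S)
  also have "\<dots> = (\<Sum>x\<in>RS. if tr x y z then cnt n x y else 0)"
    by (rule sum.inter_filter[OF finite_RS])
  finally show ?thesis .
qed

lemma d_sum:
  assumes n: "2 \<le> n"
  shows "d n = (\<Sum>p\<in>RS \<times> RS. cnt n (fst p) (snd p))"
proof -
  have "A n = (\<Union>p\<in>RS \<times> RS. S n (fst p) (snd p))"
  proof
    show "A n \<subseteq> (\<Union>p\<in>RS \<times> RS. S n (fst p) (snd p))"
    proof
      fix m assume m: "m \<in> A n"
      have "n - 2 < n" "n - 1 < n" using n by auto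
      then have "cond m (n-2)" "cond m (n-1)" using m unfolding A_def valid_alt by auto
      then have "(row m (n-2), row m (n-1)) \<in> RS \<times> RS" using row_RS by blast
      moreover have "m \<in> S n (row m (n-2)) (row m (n-1))" using m unfolding S_def by simp
      ultimately show "m \<in> (\<Union>p\<in>RS \<times> RS. S n (fst p) (snd p))" by (intro UN_I[of "(row m (n-2), row m (n-1))"]) simp_all
    qed
  qed (auto simp: S_def)
  moreover have "card (\<Union>p\<in>RS \<times> RS. S n (fst p) (snd p)) = (\<Sum>p\<in>RS \<times> RS. cnt n (fst p) (snd p))"
    unfolding cnt_def
  proof (rule card_UN_disjoint)
    show "finite (RS \<times> RS)" using finite_RS by simp
    show "\<forall>p\<in>RS \<times> RS. finite (S n (fst p) (snd p))" by (simp add: finite_S)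
    show "\<forall>p\<in>RS \<times> RS. \<forall>q\<in>RS \<times> RS. p \<noteq> q \<longrightarrow> S n (fst p) (snd p) \<inter> S n (fst q) (snd q) = {}"
    proof (intro ballI impI)
      fix p q :: "(nat \<times> nat) \<times> nat \<times> nat" assume "p \<noteq> q"
      then show "S n (fst p) (snd p) \<inter> S n (fst q) (snd q) = {}"
        unfolding S_def by (auto simp: prod_eq_iff)
    qed
  qed
  ultimately show ?thesis unfolding d_def by simp
qed


definition Z :: "nat \<Rightarrow> nat \<Rightarrow> nat" where "Z = (\<lambda>_ _. 0)"
definition m1 :: "nat \<Rightarrow> nat \<Rightarrow> nat" where "m1 = Z(0 := mk (0,1))"
definition m2 :: "nat \<Rightarrow> nat \<Rightarrow> nat" where "m2 = m1(1 := mk (1,0))"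

lemma recon:
  fixes m' m :: "nat \<Rightarrow> nat \<Rightarrow> nat"
  assumes "m'(n := (\<lambda>_. 0)) = m" "\<forall>j. 2 \<le> j \<longrightarrow> m' n j = 0" "m' n 0 = a" "m' n 1 = b"
  shows "m' = m(n := mk (a,b))"
proof
  fix i show "m' i = (m(n := mk (a, b))) i"
  proof (cases "i = n")
    case True
    have "mk (row m' n) = m' n" using mk_row[of m' n] assms(2) by blast
    then show ?thesis using True assms(3,4) unfolding row_def by simp
  next
    case False
    then have "m' i = (m'(n := (\<lambda>_. 0))) i" by simp
    then show ?thesis using False assms(1) by simp
  qed
qed

lemma cond0: "cond m 0 \<Longrightarrow> m 0 0 = 0 \<and> m 0 1 = 1"
  unfolding cond_def all_less_two by auto

lemma cond1: "m 0 0 = 0 \<Longrightarrow> m 0 1 = 1 \<Longrightarrow> cond m 1 \<Longrightarrow> m 1 0 = 1 \<and> m 1 1 = 0"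
  unfolding cond_def all_less_two by auto

lemma A1: "A 1 = {m1}"
proof
  show "A 1 \<subseteq> {m1}"
  proof
    fix m' assume "m' \<in> A 1"
    then have h: "m'(0 := (\<lambda>_. 0)) \<in> A 0" "\<forall>j. 2 \<le> j \<longrightarrow> m' 0 j = 0" "cond m' 0"
      unfolding A_def using ext_valid[of 0 m'] by auto
    have "m'(0 := (\<lambda>_. 0)) = Z" using h(1) unfolding A_0 Z_def by simp
    then have "m' = Z(0 := mk (0,1))" using recon[of m' 0 Z, OF _ h(2)] cond0[OF h(3)] by blast
    then show "m' \<in> {m1}" unfolding m1_def by simp
  qed
next
  have "valid_array (Suc 0) m1"
    unfolding ext_valid[of 0]
  proof (intro conjI)
    show "valid_array 0 (m1(0 := (\<lambda>_. 0)))" using A_0 unfolding A_def m1_def Z_def by auto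
    show "\<forall>j. 2 \<le> j \<longrightarrow> m1 0 j = 0" unfolding m1_def mk_def by simp
    show "cond m1 0" unfolding m1_def mk_def cond_def all_less_two by simp
  qed
  then show "{m1} \<subseteq> A 1" unfolding A_def by (simp add: One_nat_def)
qed

lemma A2: "A 2 = {m2}"
proof
  show "A 2 \<subseteq> {m2}"
  proof
    fix m' assume "m' \<in> A 2"
    then have h: "m'(1 := (\<lambda>_. 0)) \<in> A 1" "\<forall>j. 2 \<le> j \<longrightarrow> m' 1 j = 0" "cond m' 1"
      unfolding A_def using ext_valid[of 1 m'] by (auto simp: numeral_2_eq_2)
    have e: "m'(1 := (\<lambda>_. 0)) = m1" using h(1) unfolding A1 by simp
    have "m' 0 0 = 0" "m' 0 1 = 1"
    proof -
      have "m' 0 = m1 0" using fun_cong[OF e, of 0] by simp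
      then show "m' 0 0 = 0" "m' 0 1 = 1" unfolding m1_def mk_def by simp_all
    qed
    then have "m' = m1(1 := mk (1,0))" using recon[of m' 1 m1, OF e h(2)] cond1[OF _ _ h(3)] by blast
    then show "m' \<in> {m2}" unfolding m2_def by simp
  qed
next
  have "valid_array (Suc 1) m2"
    unfolding ext_valid[of 1]
  proof (intro conjI)
    have "m2(1 := (\<lambda>_. 0)) = m1" unfolding m2_def m1_def Z_def by (auto simp: fun_eq_iff)
    then show "valid_array 1 (m2(1 := (\<lambda>_. 0)))" using A1 unfolding A_def by auto
    show "\<forall>j. 2 \<le> j \<longrightarrow> m2 1 j = 0" unfolding m2_def mk_def by simp
    show "cond m2 1" unfolding m2_def m1_def Z_def mk_def cond_def all_less_two by simp
  qed
  then show "{m2} \<subseteq> A 2" unfolding A_def by (simp add: numeral_2_eq_2)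
qed

lemma d1: "d 1 = 1" unfolding d_def A1 by simp
lemma d2: "d 2 = 1" unfolding d_def A2 by simp

lemma cnt2: "cnt 2 x y = (if x = (0,1) \<and> y = (1,0) then 1 else 0)"
proof -
  have r: "row m2 0 = (0,1)" "row m2 1 = (1,0)" unfolding m2_def m1_def Z_def mk_def row_def by simp_all
  have "S 2 x y = (if x = (0,1) \<and> y = (1,0) then {m2} else {})"
    unfolding S_def A2 using r by auto
  then show ?thesis unfolding cnt_def by simp
qed



definition Reach :: "((nat \<times> nat) \<times> nat \<times> nat) set" where
  "Reach = {((0,1), (1,0)), ((0,1), (1,2)), ((0,2), (1,0)), ((1,0), (0,1)), ((1,0), (2,1)),
            ((1,2), (0,1)), ((1,2), (2,0)), ((2,0), (0,1)), ((2,1), (0,1)), ((2,1), (0,2))}"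

lemma RS_eq: "RS = {(0,0),(0,1),(0,2),(1,0),(1,1),(1,2),(2,0),(2,1),(2,2)}"
  unfolding RS_def by auto

lemma closure:
  assumes xy: "(x,y) \<in> Reach" and t: "tr x y z"
  shows "(y,z) \<in> Reach"
proof -
  obtain a b where z: "z = (a,b)" by (cases z)
  have "a \<le> 2" "b \<le> 2" using t z unfolding tr_def by simp_all
  then have "a = 0 \<or> a = 1 \<or> a = 2" "b = 0 \<or> b = 1 \<or> b = 2" by auto
  then show ?thesis using xy t unfolding z Reach_def tr_def
    by (elim disjE) auto
qed

lemma zero: "2 \<le> n \<Longrightarrow> (x,y) \<notin> Reach \<Longrightarrow> cnt n x y = 0"
proof (induction n arbitrary: x y rule: nat_induct_at_least)
  case base
  then show ?case unfolding cnt2 Reach_def by auto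
next
  case (Suc n)
  have "(\<Sum>w\<in>RS. if tr w x y then cnt n w x else 0) = 0"
  proof (rule sum.neutral, rule ballI)
    fix w assume "w \<in> RS"
    show "(if tr w x y then cnt n w x else 0) = 0"
    proof (cases "tr w x y")
      case True
      then have "(w,x) \<notin> Reach" using closure Suc.prems by blast
      then show ?thesis using Suc.IH True by simp
    qed simp
  qed
  then show ?case using cnt_step[OF Suc.hyps] by simp
qed

lemma eqs:
"2 \<le> n \<Longrightarrow> cnt (Suc n) (0,1) (1,0) = cnt n (1,0) (0,1) + cnt n (1,2) (0,1) + cnt n (2,0) (0,1) + cnt n (2,1) (0,1)"
"2 \<le> n \<Longrightarrow> cnt (Suc n) (0,1) (1,2) = cnt n (1,0) (0,1) + cnt n (2,0) (0,1)"
"2 \<le> n \<Longrightarrow> cnt (Suc n) (0,2) (1,0) = cnt n (2,1) (0,2)"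
"2 \<le> n \<Longrightarrow> cnt (Suc n) (1,0) (0,1) = cnt n (0,1) (1,0) + cnt n (0,2) (1,0)"
"2 \<le> n \<Longrightarrow> cnt (Suc n) (1,0) (2,1) = cnt n (0,1) (1,0) + cnt n (0,2) (1,0)"
"2 \<le> n \<Longrightarrow> cnt (Suc n) (1,2) (0,1) = cnt n (0,1) (1,2)"
"2 \<le> n \<Longrightarrow> cnt (Suc n) (1,2) (2,0) = cnt n (0,1) (1,2)"
"2 \<le> n \<Longrightarrow> cnt (Suc n) (2,0) (0,1) = cnt n (1,2) (2,0)"
"2 \<le> n \<Longrightarrow> cnt (Suc n) (2,1) (0,1) = cnt n (1,0) (2,1)"
"2 \<le> n \<Longrightarrow> cnt (Suc n) (2,1) (0,2) = cnt n (1,0) (2,1)"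
  by (simp_all add: cnt_step RS_eq tr_def zero Reach_def)


lemma d_reach: "2 \<le> n \<Longrightarrow> d n = (\<Sum>p\<in>Reach. cnt n (fst p) (snd p))"
proof -
  assume n: "2 \<le> n"
  have sub: "Reach \<subseteq> RS \<times> RS" unfolding Reach_def RS_eq by simp
  have "(\<Sum>p\<in>Reach. cnt n (fst p) (snd p)) = (\<Sum>p\<in>RS \<times> RS. cnt n (fst p) (snd p))"
  proof (rule sum.mono_neutral_left)
    show "finite (RS \<times> RS)" using finite_RS by simp
    show "Reach \<subseteq> RS \<times> RS" by (rule sub)
    show "\<forall>i\<in>RS \<times> RS - Reach. cnt n (fst i) (snd i) = 0"
      using zero[OF n] by auto
  qed
  then show ?thesis using d_sum[OF n] by simp
qed

lemma d_explicit: "2 \<le> n \<Longrightarrow> d n = cnt n (0,1) (1,0) + cnt n (0,1) (1,2) + cnt n (0,2) (1,0) +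
  cnt n (1,0) (0,1) + cnt n (1,0) (2,1) + cnt n (1,2) (0,1) + cnt n (1,2) (2,0) +
  cnt n (2,0) (0,1) + cnt n (2,1) (0,1) + cnt n (2,1) (0,2)"
  by (simp add: d_reach Reach_def)

lemma d3: "d 3 = 2"
proof -
  have "d (Suc 2) = 2" using d_explicit[of "Suc 2"] eqs[of 2] by (simp add: cnt2)
  then show ?thesis by (simp add: numeral_3_eq_3 numeral_2_eq_2)
qed

lemma d4: "d 4 = 4"
proof -
  have "d (Suc (Suc 2)) = 4" using d_explicit[of "Suc (Suc 2)"] eqs[of 2] eqs[of "Suc 2"] by (simp add: cnt2)
  then show ?thesis by (simp add: eval_nat_numeral)
qed

lemma rec: "2 \<le> k \<Longrightarrow> d (Suc (Suc (Suc k))) = d (Suc (Suc k)) + 2 * d k"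
proof -
  assume k: "2 \<le> k"
  have k1: "2 \<le> Suc k" "2 \<le> Suc (Suc k)" "2 \<le> Suc (Suc (Suc k))" using k by auto
  show ?thesis
    unfolding d_explicit[OF k] d_explicit[OF k1(2)] d_explicit[OF k1(3)]
    by (simp only: eqs[OF k] eqs[OF k1(1)] eqs[OF k1(2)]) (simp add: algebra_simps)
qed

theorem theorem5:
  shows "d 1 = 1 \<and> d 2 = 1 \<and> d 3 = 2 \<and> (\<forall>n\<ge>4. d n = d (n - 1) + 2 * d (n - 3))"
proof (intro conjI allI impI)
  show "d 1 = 1" by (rule d1)
  show "d 2 = 1" by (rule d2)
  show "d 3 = 2" by (rule d3)
  fix n :: nat assume n: "4 \<le> n"
  show "d n = d (n - 1) + 2 * d (n - 3)"
  proof (cases "n = 4")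
    case True then show ?thesis using d1 d3 d4 by simp
  next
    case False
    then have k: "n = Suc (Suc (Suc (n-3)))" "2 \<le> n - 3" using n by auto
    have e1: "d n = d (Suc (Suc (n-3))) + 2 * d (n-3)" using rec[OF k(2)] k(1) by metis
    have e2: "n - 1 = Suc (Suc (n-3))" using n by simp
    show ?thesis using e1 e2 by simp
  qed
qed

end
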